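(* Consider a two-player bilinear game with $f_1(x_1,x_2)=x_1^\top Ax_2$, $f_2(x_1,x_2)=x_1^\top B^\top x_2$, $A\in\mathbb{R}^{n_1\times n_2}$, $B\in\mathbb{R}^{n_2\times n_1}$, step sizes $\gamma_1,\gamma_2>0$, and let $W$ be either $W_s$ (simultaneous gradient play) or $W_a$ (alternating gradient play) as defined in the context. Write $a_{pq}$, $b_{pq}$ for the $(p,q)$ entries of $A$, $B$. (1) If coordinate $x_{2,j}$ is disturbance decoupled from coordinate $x_{1,i}$, then $b_{ji}=0$ and $\sum_{q=1}^{n_2}b_{qi}\sum_{\ell=1}^{n_1}a_{\ell q}b_{j\ell}=0$. (2) If coordinate $x_{1,j}$ is disturbance decoupled from coordinate $x_{2,i}$, then $a_{ji}=0$ and $\sum_{q=1}^{n_1}a_{qi}\sum_{\ell=1}^{n_2}b_{\ell q}a_{j\ell}=0$.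
   Context: Player 1 has action $x_1=(x_{1,1},\ldots,x_{1,n_1})\in\mathbb{R}^{n_1}$, player 2 has $x_2=(x_{2,1},\ldots,x_{2,n_2})\in\mathbb{R}^{n_2}$; the joint vector $x=(x_1,x_2)\in\mathbb{R}^{n_1+n_2}$. Simultaneous gradient play $x_1^{k+1}=x_1^k-\gamma_1Ax_2^k$, $x_2^{k+1}=x_2^k-\gamma_2Bx_1^k$ is the linear iteration $x^{k+1}=W_sx^k$ with $W_s=\begin{bmatrix}I&-\gamma_1A\\-\gamma_2B&I\end{bmatrix}$. Alternating gradient play $x_1^{k+1}=x_1^k-\gamma_1Ax_2^k$, $x_2^{k+1}=x_2^k-\gamma_2Bx_1^{k+1}$ is the linear iteration $x^{k+1}=W_ax^k$ with $W_a=\begin{bmatrix}I&-\gamma_1A\\-\gamma_2B&I+\gamma_1\gamma_2BA\end{bmatrix}$. Each coordinate is treated as a separate scalar player whose game-graph matrix is $W$. For coordinates $p\neq q$ of $\mathbb{R}^{n_1+n_2}$, with $\gamma_{(q)}$ the step size of the player owning coordinate $q$, coordinate $p$ is disturbance decoupled from coordinate $q$ if for every initial $x^0$ and every real sequence $(\delta^k)_{k\ge0}$, the iterations $x^{k+1}=Wx^k$ and $y^{k+1}=Wy^k-\gamma_{(q)}\delta^ke_q$ with $y^0=x^0$ satisfy $y^k_p=x^k_p$ for all $k\ge0$ ($e_q$ the $q$-th standard basis vector). *)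

theory Defs
  imports "HOL-Analysis.Analysis"
begin

text \<open>Joint action vector in R^(n1+n2): index type 'n1 + 'n2; coordinate x_{1,i} is
  index Inl i, coordinate x_{2,j} is index Inr j.
  A is n1 x n2 (real^'n2^'n1), B is n2 x n1 (real^'n1^'n2).\<close>

definition W_sim :: "real \<Rightarrow> real \<Rightarrow> real^'n2^'n1 \<Rightarrow> real^'n1^'n2
    \<Rightarrow> real^('n1::finite + 'n2::finite)^('n1 + 'n2)" where
  "W_sim \<gamma>1 \<gamma>2 A B = (\<chi> p q. case p of
      Inl i \<Rightarrow> (case q of Inl k \<Rightarrow> (if i = k then 1 else 0) | Inr l \<Rightarrow> - \<gamma>1 * A $ i $ l)
    | Inr j \<Rightarrow> (case q of Inl k \<Rightarrow> - \<gamma>2 * B $ j $ k | Inr l \<Rightarrow> (if j = l then 1 else 0)))"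

definition W_alt :: "real \<Rightarrow> real \<Rightarrow> real^'n2^'n1 \<Rightarrow> real^'n1^'n2
    \<Rightarrow> real^('n1::finite + 'n2::finite)^('n1 + 'n2)" where
  "W_alt \<gamma>1 \<gamma>2 A B = (\<chi> p q. case p of
      Inl i \<Rightarrow> (case q of Inl k \<Rightarrow> (if i = k then 1 else 0) | Inr l \<Rightarrow> - \<gamma>1 * A $ i $ l)
    | Inr j \<Rightarrow> (case q of Inl k \<Rightarrow> - \<gamma>2 * B $ j $ k
                       | Inr l \<Rightarrow> (if j = l then 1 else 0) + \<gamma>1 * \<gamma>2 * (B ** A) $ j $ l))"

text \<open>Step size of the player owning coordinate q.\<close>
definition step_of :: "real \<Rightarrow> real \<Rightarrow> ('n1 + 'n2) \<Rightarrow> real" where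
  "step_of \<gamma>1 \<gamma>2 q = (case q of Inl _ \<Rightarrow> \<gamma>1 | Inr _ \<Rightarrow> \<gamma>2)"

text \<open>Undisturbed iteration x^{k+1} = W x^k.\<close>
primrec lin_iter :: "real^'m^'m \<Rightarrow> real^'m \<Rightarrow> nat \<Rightarrow> real^'m" where
  "lin_iter W x0 0 = x0"
| "lin_iter W x0 (Suc k) = W *v lin_iter W x0 k"

text \<open>Disturbed iteration y^{k+1} = W y^k - c * delta^k * e_q.\<close>
primrec dist_iter :: "real^'m^'m \<Rightarrow> real \<Rightarrow> 'm \<Rightarrow> (nat \<Rightarrow> real) \<Rightarrow> real^'m \<Rightarrow> nat \<Rightarrow> real^'m" where
  "dist_iter W c q \<delta> x0 0 = x0"
| "dist_iter W c q \<delta> x0 (Suc k) = W *v dist_iter W c q \<delta> x0 k - (c * \<delta> k) *\<^sub>R axis q 1"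

text \<open>Coordinate p is disturbance decoupled from coordinate q (disturbance gain c = step size of q's owner).\<close>
definition dist_decoupled :: "real^'m^'m \<Rightarrow> real \<Rightarrow> 'm \<Rightarrow> 'm \<Rightarrow> bool" where
  "dist_decoupled W c p q \<longleftrightarrow>
     (\<forall>x0 \<delta> k. dist_iter W c q \<delta> x0 k $ p = lin_iter W x0 k $ p)"

end

theory Submission
  imports Defs
begin

lemma sumPlus:
  "(\<Sum>r\<in>(UNIV::('a::finite+'b::finite) set). f r) = (\<Sum>k\<in>UNIV. f (Inl k)) + (\<Sum>l\<in>UNIV. f (Inr l))"
proof -
  have "(\<Sum>r\<in>(UNIV::('a+'b) set). f r) = (\<Sum>r\<in>(UNIV <+> UNIV). f r)" by (simp only: UNIV_Plus_UNIV)
  also have "\<dots> = sum (f \<circ> Inl) UNIV + sum (f \<circ> Inr) UNIV" by (rule sum.Plus) auto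
  finally show ?thesis by (simp add: comp_def)
qed

lemma mvneg: "(W::real^'m^'m) *v (- v) = - (W *v v)"
  by (simp add: vec_eq_iff matrix_vector_mult_def sum_negf)

lemma key:
  fixes W :: "real^'m^'m"
  assumes "dist_decoupled W c p q" "c \<noteq> 0"
  shows "(W *v axis q 1)$p = 0" "(W *v (W *v axis q 1))$p = 0"
        "(W *v (W *v (W *v axis q 1)))$p = 0"
proof -
  define d :: "nat \<Rightarrow> real" where "d = (\<lambda>m. if m = 0 then 1 else 0)"
  have lin: "lin_iter W 0 k = 0" for k by (induction k) auto
  have ds: "dist_iter W c q d 0 (Suc k) = (-c) *\<^sub>R (((*v) W ^^ k) (axis q 1))" for k
    by (induction k) (auto simp: d_def matrix_vector_mult_scaleR mvneg)
  have h: "dist_iter W c q d 0 k $ p = 0" for k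
    using assms(1) lin[of k] unfolding dist_decoupled_def by (metis vec_lambda_inverse zero_vec_def UNIV_I)
  have h2: "((-c) *\<^sub>R (((*v) W ^^ k) (axis q 1))) $ p = 0" for k
    using h[of "Suc k"] unfolding ds .
  show "(W *v axis q 1)$p = 0"
    using h2[of 1] assms(2) by simp
  show "(W *v (W *v axis q 1))$p = 0"
    using h2[of 2] assms(2) by (simp add: numeral_eq_Suc)
  show "(W *v (W *v (W *v axis q 1)))$p = 0"
    using h2[of 3] assms(2) by (simp add: numeral_eq_Suc)
qed

lemma Ws_ent:
  "W_sim g1 g2 A B $ Inl i $ Inl k = (if i = k then 1 else 0)"
  "W_sim g1 g2 A B $ Inl i $ Inr l = - g1 * A $ i $ l"
  "W_sim g1 g2 A B $ Inr j $ Inl k = - g2 * B $ j $ k"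
  "W_sim g1 g2 A B $ Inr j $ Inr l = (if j = l then 1 else 0)"
  by (simp_all add: W_sim_def)

lemma Wa_ent:
  "W_alt g1 g2 A B $ Inl i $ Inl k = (if i = k then 1 else 0)"
  "W_alt g1 g2 A B $ Inl i $ Inr l = - g1 * A $ i $ l"
  "W_alt g1 g2 A B $ Inr j $ Inl k = - g2 * B $ j $ k"
  "W_alt g1 g2 A B $ Inr j $ Inr l = (if j = l then 1 else 0) + g1 * g2 * (B ** A) $ j $ l"
  by (simp_all add: W_alt_def)

lemma ifmul: "(if P then 1 else 0) * (y::real) = (if P then y else 0)" by simp

lemma sim_l: "(W_sim g1 g2 A B *v x) $ Inl i = x $ Inl i - g1 * (\<Sum>l\<in>UNIV. A$i$l * x$Inr l)"
  unfolding matrix_vector_mult_def vec_lambda_beta sumPlus Ws_ent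
  by (simp add: sum_distrib_left sum_negf ifmul mult.assoc)
lemma sim_r: "(W_sim g1 g2 A B *v x) $ Inr j = x $ Inr j - g2 * (\<Sum>k\<in>UNIV. B$j$k * x$Inl k)"
  unfolding matrix_vector_mult_def vec_lambda_beta sumPlus Ws_ent
  by (simp add: sum_distrib_left sum_negf ifmul mult.assoc)
lemma alt_l: "(W_alt g1 g2 A B *v x) $ Inl i = x $ Inl i - g1 * (\<Sum>l\<in>UNIV. A$i$l * x$Inr l)"
  unfolding matrix_vector_mult_def vec_lambda_beta sumPlus Wa_ent
  by (simp add: sum_distrib_left sum_negf ifmul mult.assoc)
lemma alt_r: "(W_alt g1 g2 A B *v x) $ Inr j = x $ Inr j - g2 * (\<Sum>k\<in>UNIV. B$j$k * x$Inl k)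
   + g1 * g2 * (\<Sum>l\<in>UNIV. (B ** A)$j$l * x$Inr l)"
  unfolding matrix_vector_mult_def vec_lambda_beta sumPlus Wa_ent
  by (simp add: sum_distrib_left sum_negf distrib_right sum.distrib mult.assoc ifmul)

lemma mulif: "(y::real) * (if P then 1 else 0) = (if P then y else 0)" by simp

lemma p1_sim:
  fixes A :: "real^'n2::finite^'n1::finite" and B :: "real^'n1^'n2"
  assumes "g1 > 0" "g2 > 0" "dist_decoupled (W_sim g1 g2 A B) g1 (Inr j) (Inl i)"
  shows "B $ j $ i = 0 \<and> (\<Sum>q\<in>UNIV. B $ q $ i * (\<Sum>l\<in>UNIV. A $ l $ q * B $ j $ l)) = 0"
proof -
  let ?W = "W_sim g1 g2 A B"
  define u :: "real^('n1+'n2)" where "u = axis (Inl i) 1"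
  define v where "v = ?W *v u"
  define w where "w = ?W *v v"
  note k = key[OF assms(3), folded u_def, folded v_def, folded w_def]
  have u1: "u$Inl k = (if k = i then 1 else 0)" "u$Inr l = 0" for k l by (auto simp: u_def axis_def)
  have v1: "v$Inl k = (if k = i then 1 else 0)" "v$Inr l = - g2 * B$l$i" for k l
    unfolding v_def by (simp_all add: sim_l sim_r u1 mulif)
  have w1: "w$Inl k = (if k = i then 1 else 0) + g1 * g2 * (\<Sum>l\<in>UNIV. A$k$l * B$l$i)"
     "w$Inr l = - 2 * g2 * B$l$i" for k l
    unfolding w_def by (simp_all add: sim_l sim_r v1 mulif sum_distrib_left sum_negf algebra_simps)
  have B0: "B$j$i = 0" using k(1) assms(1,2) by (simp add: v_def[symmetric] v1)
  have "(?W *v w)$Inr j = - g1 * g2 * g2 * (\<Sum>k\<in>UNIV. \<Sum>l\<in>UNIV. B$j$k * A$k$l * B$l$i)"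
    by (simp add: sim_r w1 B0 mulif sum_distrib_left sum.distrib sum_negf algebra_simps)
  hence S: "(\<Sum>k\<in>UNIV. \<Sum>l\<in>UNIV. B$j$k * A$k$l * B$l$i) = 0" using k(3) assms(1,2) by simp
  have "(\<Sum>q\<in>UNIV. B $ q $ i * (\<Sum>l\<in>UNIV. A $ l $ q * B $ j $ l)) = (\<Sum>q\<in>UNIV. \<Sum>l\<in>UNIV. B$j$l * A$l$q * B$q$i)"
    by (simp add: sum_distrib_left mult_ac)
  also have "\<dots> = (\<Sum>k\<in>UNIV. \<Sum>l\<in>UNIV. B$j$k * A$k$l * B$l$i)" by (rule sum.swap)
  finally show ?thesis using S B0 by simp
qed

lemma p1_alt:
  fixes A :: "real^'n2::finite^'n1::finite" and B :: "real^'n1^'n2"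
  assumes "g1 > 0" "g2 > 0" "dist_decoupled (W_alt g1 g2 A B) g1 (Inr j) (Inl i)"
  shows "B $ j $ i = 0 \<and> (\<Sum>q\<in>UNIV. B $ q $ i * (\<Sum>l\<in>UNIV. A $ l $ q * B $ j $ l)) = 0"
proof -
  let ?W = "W_alt g1 g2 A B"
  define u :: "real^('n1+'n2)" where "u = axis (Inl i) 1"
  define v where "v = ?W *v u"
  define w where "w = ?W *v v"
  note k = key[OF assms(3), folded u_def, folded v_def, folded w_def]
  have u1: "u$Inl k = (if k = i then 1 else 0)" "u$Inr l = 0" for k l by (auto simp: u_def axis_def)
  have v1: "v$Inl k = (if k = i then 1 else 0)" "v$Inr l = - g2 * B$l$i" for k l
    unfolding v_def by (simp_all add: alt_l alt_r u1 mulif)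
  have B0: "B$j$i = 0" using k(1) assms(1,2) by (simp add: v_def[symmetric] v1)
  have "w$Inr j = - 2 * g2 * B$j$i - g1 * g2 * g2 * (\<Sum>l\<in>UNIV. \<Sum>k\<in>UNIV. B$j$k * A$k$l * B$l$i)"
    unfolding w_def by (simp add: alt_r v1 mulif matrix_matrix_mult_def sum_distrib_left
        sum_distrib_right sum_negf algebra_simps)
  hence S: "(\<Sum>l\<in>UNIV. \<Sum>k\<in>UNIV. B$j$k * A$k$l * B$l$i) = 0" using k(2) assms(1,2) B0 by simp
  have "(\<Sum>q\<in>UNIV. B $ q $ i * (\<Sum>l\<in>UNIV. A $ l $ q * B $ j $ l)) = (\<Sum>l\<in>UNIV. \<Sum>k\<in>UNIV. B$j$k * A$k$l * B$l$i)"
    by (simp add: sum_distrib_left mult_ac)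
  then show ?thesis using S B0 by simp
qed

lemma p2_sim:
  fixes A :: "real^'n2::finite^'n1::finite" and B :: "real^'n1^'n2"
  assumes "g1 > 0" "g2 > 0" "dist_decoupled (W_sim g1 g2 A B) g2 (Inl j) (Inr i)"
  shows "A $ j $ i = 0 \<and> (\<Sum>q\<in>UNIV. A $ q $ i * (\<Sum>l\<in>UNIV. B $ l $ q * A $ j $ l)) = 0"
proof -
  let ?W = "W_sim g1 g2 A B"
  define u :: "real^('n1+'n2)" where "u = axis (Inr i) 1"
  define v where "v = ?W *v u"
  define w where "w = ?W *v v"
  note k = key[OF assms(3), folded u_def, folded v_def, folded w_def]
  have u1: "u$Inr k = (if k = i then 1 else 0)" "u$Inl l = 0" for k l by (auto simp: u_def axis_def)
  have v1: "v$Inr k = (if k = i then 1 else 0)" "v$Inl l = - g1 * A$l$i" for k l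
    unfolding v_def by (simp_all add: sim_l sim_r u1 mulif)
  have w1: "w$Inr k = (if k = i then 1 else 0) + g1 * g2 * (\<Sum>l\<in>UNIV. B$k$l * A$l$i)"
     "w$Inl l = - 2 * g1 * A$l$i" for k l
    unfolding w_def by (simp_all add: sim_l sim_r v1 mulif sum_distrib_left sum_negf algebra_simps)
  have A0: "A$j$i = 0" using k(1) assms(1,2) by (simp add: v_def[symmetric] v1)
  have "(?W *v w)$Inl j = - g1 * g1 * g2 * (\<Sum>k\<in>UNIV. \<Sum>l\<in>UNIV. A$j$k * B$k$l * A$l$i)"
    by (simp add: sim_l w1 A0 mulif sum_distrib_left sum.distrib sum_negf algebra_simps)
  hence S: "(\<Sum>k\<in>UNIV. \<Sum>l\<in>UNIV. A$j$k * B$k$l * A$l$i) = 0" using k(3) assms(1,2) by simp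
  have "(\<Sum>q\<in>UNIV. A $ q $ i * (\<Sum>l\<in>UNIV. B $ l $ q * A $ j $ l)) = (\<Sum>q\<in>UNIV. \<Sum>l\<in>UNIV. A$j$l * B$l$q * A$q$i)"
    by (simp add: sum_distrib_left mult_ac)
  also have "\<dots> = (\<Sum>k\<in>UNIV. \<Sum>l\<in>UNIV. A$j$k * B$k$l * A$l$i)" by (rule sum.swap)
  finally show ?thesis using S A0 by simp
qed

lemma p2_alt:
  fixes A :: "real^'n2::finite^'n1::finite" and B :: "real^'n1^'n2"
  assumes "g1 > 0" "g2 > 0" "dist_decoupled (W_alt g1 g2 A B) g2 (Inl j) (Inr i)"
  shows "A $ j $ i = 0 \<and> (\<Sum>q\<in>UNIV. A $ q $ i * (\<Sum>l\<in>UNIV. B $ l $ q * A $ j $ l)) = 0"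
proof -
  let ?W = "W_alt g1 g2 A B"
  define u :: "real^('n1+'n2)" where "u = axis (Inr i) 1"
  define v where "v = ?W *v u"
  define w where "w = ?W *v v"
  note k = key[OF assms(3), folded u_def, folded v_def, folded w_def]
  have u1: "u$Inr k = (if k = i then 1 else 0)" "u$Inl l = 0" for k l by (auto simp: u_def axis_def)
  have v1: "v$Inr k = (if k = i then 1 else 0) + g1 * g2 * (\<Sum>l\<in>UNIV. B$k$l * A$l$i)"
     "v$Inl l = - g1 * A$l$i" for k l
    unfolding v_def by (simp_all add: alt_l alt_r u1 mulif matrix_matrix_mult_def)
  have A0: "A$j$i = 0" using k(1) assms(1,2) by (simp add: v_def[symmetric] v1)
  have "w$Inl j = - 2 * g1 * A$j$i - g1 * g1 * g2 * (\<Sum>k\<in>UNIV. \<Sum>l\<in>UNIV. A$j$k * B$k$l * A$l$i)"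
    unfolding w_def by (simp add: alt_l v1 mulif sum_distrib_left sum.distrib sum_negf algebra_simps)
  hence S: "(\<Sum>k\<in>UNIV. \<Sum>l\<in>UNIV. A$j$k * B$k$l * A$l$i) = 0" using k(2) assms(1,2) A0 by simp
  have "(\<Sum>q\<in>UNIV. A $ q $ i * (\<Sum>l\<in>UNIV. B $ l $ q * A $ j $ l)) = (\<Sum>q\<in>UNIV. \<Sum>l\<in>UNIV. A$j$l * B$l$q * A$q$i)"
    by (simp add: sum_distrib_left mult_ac)
  also have "\<dots> = (\<Sum>k\<in>UNIV. \<Sum>l\<in>UNIV. A$j$k * B$k$l * A$l$i)" by (rule sum.swap)
  finally show ?thesis using S A0 by simp
qed

theorem corollary4:
  fixes A :: "real^'n2::finite^'n1::finite" and B :: "real^'n1^'n2"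
    and \<gamma>1 \<gamma>2 :: real and W :: "real^('n1 + 'n2)^('n1 + 'n2)"
  assumes "\<gamma>1 > 0" and "\<gamma>2 > 0"
    and "W = W_sim \<gamma>1 \<gamma>2 A B \<or> W = W_alt \<gamma>1 \<gamma>2 A B"
  shows "(\<forall>i j. dist_decoupled W (step_of \<gamma>1 \<gamma>2 (Inl i)) (Inr j) (Inl i) \<longrightarrow>
             B $ j $ i = 0 \<and> (\<Sum>q\<in>UNIV. B $ q $ i * (\<Sum>l\<in>UNIV. A $ l $ q * B $ j $ l)) = 0)
       \<and> (\<forall>i j. dist_decoupled W (step_of \<gamma>1 \<gamma>2 (Inr i)) (Inl j) (Inr i) \<longrightarrow>
             A $ j $ i = 0 \<and> (\<Sum>q\<in>UNIV. A $ q $ i * (\<Sum>l\<in>UNIV. B $ l $ q * A $ j $ l)) = 0)"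
  apply (intro conjI allI impI)
  subgoal using assms(3) p1_sim[OF assms(1,2), where A=A and B=B] p1_alt[OF assms(1,2), where A=A and B=B] p2_sim[OF assms(1,2), where A=A and B=B] p2_alt[OF assms(1,2), where A=A and B=B] by (auto simp: step_of_def)
  subgoal using assms(3) p1_sim[OF assms(1,2), where A=A and B=B] p1_alt[OF assms(1,2), where A=A and B=B] p2_sim[OF assms(1,2), where A=A and B=B] p2_alt[OF assms(1,2), where A=A and B=B] by (auto simp: step_of_def)
  subgoal using assms(3) p1_sim[OF assms(1,2), where A=A and B=B] p1_alt[OF assms(1,2), where A=A and B=B] p2_sim[OF assms(1,2), where A=A and B=B] p2_alt[OF assms(1,2), where A=A and B=B] by (auto simp: step_of_def)
  subgoal using assms(3) p1_sim[OF assms(1,2), where A=A and B=B] p1_alt[OF assms(1,2), where A=A and B=B] p2_sim[OF assms(1,2), where A=A and B=B] p2_alt[OF assms(1,2), where A=A and B=B] by (auto simp: step_of_def)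
  done
end
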